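(* Let $n\ge 2$, $\zeta=2\pi/n$, $s_k=2\sin(k\pi/n)$, consider $V$ as in the context with $\sigma=1$, and define for $a>0$ $$S(a)=\frac{1}{as_1}-\frac{1}{2s_1^2}\sum_{k=1}^{n-1}W'(a^2s_k^2)\,s_k^2.$$ Then $S(a)\to\infty$ as $a\to0^+$ and $S(a)\to0$ as $a\to+\infty$; consequently there is at least one $\alpha>0$ with $S(\alpha)=1$, and for any such $\alpha$ the configuration $\mathbf a=(a_1,\dots,a_n)$ with $a_j=\alpha e^{ij\zeta}$ (identifying $\mathbb R^2$ with $\mathbb C$) is a critical point of $V$ (a circular equilibrium).
   Context: For $u=(u_1,\dots,u_n)\in(\mathbb R^2)^n$ let $$V(u)=\sum_{j=1}^{n-1}U(|u_{j+1}-u_j|^2)+U(|u_n-u_1|^2)+\sum_{1\le j<k\le n}W(|u_j-u_k|^2),$$ where $U(x)=x-2x^{1/2}$ and $W\in C^2((0,\infty))$ satisfies $\lim_{x\to0}W(x)=\lim_{x\to0}(-W'(x))=+\infty$ and $\lim_{x\to\infty}W(x)=\lim_{x\to\infty}W'(x)=0$. $V$ is defined on $\Omega=\{u\in\mathbb R^{2n}:u_j\ne u_k\text{ for }j\ne k\}$. *)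

theory Defs
  imports "HOL-Analysis.Analysis"
begin

text \<open>Configurations are u :: nat => complex, only the values u 1, ..., u n matter
  (R^2 identified with C).\<close>

definition U_pot :: "real \<Rightarrow> real" where
  "U_pot x = x - 2 * sqrt x"

definition V_pot :: "nat \<Rightarrow> (real \<Rightarrow> real) \<Rightarrow> (nat \<Rightarrow> complex) \<Rightarrow> real" where
  "V_pot n W u =
     (\<Sum>j=1..n-1. U_pot ((cmod (u (j+1) - u j))^2)) + U_pot ((cmod (u n - u 1))^2)
     + (\<Sum>j=1..n. \<Sum>k=j+1..n. W ((cmod (u j - u k))^2))"

definition Omega :: "nat \<Rightarrow> (nat \<Rightarrow> complex) set" where
  "Omega n = {u. \<forall>j\<in>{1..n}. \<forall>k\<in>{1..n}. j \<noteq> k \<longrightarrow> u j \<noteq> u k}"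

definition C2_pos :: "(real \<Rightarrow> real) \<Rightarrow> bool" where
  "C2_pos W \<longleftrightarrow> (\<forall>x>0. W differentiable (at x)) \<and>
     (\<forall>x>0. deriv W differentiable (at x)) \<and> continuous_on {0<..} (deriv (deriv W))"

definition critical_point :: "nat \<Rightarrow> (real \<Rightarrow> real) \<Rightarrow> (nat \<Rightarrow> complex) \<Rightarrow> bool" where
  "critical_point n W u \<longleftrightarrow> u \<in> Omega n \<and>
     (\<forall>j\<in>{1..n}. \<forall>v::complex.
        ((\<lambda>t::real. V_pot n W (u(j := u j + of_real t * v))) has_real_derivative 0) (at 0))"

definition S_fun :: "nat \<Rightarrow> (real \<Rightarrow> real) \<Rightarrow> real \<Rightarrow> real" where
  "S_fun n W a = (let s = (\<lambda>k::nat. 2 * sin (real k * pi / real n)) in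
     1 / (a * s 1) - 1 / (2 * (s 1)^2) * (\<Sum>k=1..n-1. deriv W (a^2 * (s k)^2) * (s k)^2))"

end

theory Submission
  imports Defs
begin

lemma sqdist_deriv:
  "((\<lambda>t::real. (cmod (w + of_real t * z))^2) has_real_derivative 2 * Re (w * cnj z)) (at 0)"
proof -
  have e: "(\<lambda>t::real. (cmod (w + of_real t * z))^2) = (\<lambda>t. (Re w + t * Re z)^2 + (Im w + t * Im z)^2)"
    by (auto simp: cmod_power2)
  show ?thesis unfolding e
    by (auto intro!: derivative_eq_intros simp: algebra_simps)
qed

lemma term_deriv:
  assumes "(F has_real_derivative F') (at ((cmod w)^2))"
  shows "((\<lambda>t::real. F ((cmod (w + of_real t * z))^2)) has_real_derivative F' * (2 * Re (w * cnj z))) (at 0)"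
  using DERIV_chain2[OF _ sqdist_deriv, of F F' w z] assms by simp

lemma U_deriv: "x > 0 \<Longrightarrow> (U_pot has_real_derivative (1 - 1 / sqrt x)) (at x)"
  unfolding U_pot_def[abs_def]
  by (auto intro!: derivative_eq_intros simp: field_simps)

definition ev :: "nat \<Rightarrow> complex \<Rightarrow> nat \<Rightarrow> complex" where
  "ev j v k = (if k = j then v else 0)"

lemma pert: "(u(j := u j + of_real t * v)) p - (u(j := u j + of_real t * v)) q
   = (u p - u q) + of_real t * (ev j v p - ev j v q)"
  by (auto simp: ev_def algebra_simps)

lemma V_deriv:
  assumes n: "n \<ge> 2" and u: "u \<in> Omega n"
    and W: "\<And>x. x > 0 \<Longrightarrow> (W has_real_derivative W' x) (at x)"
  shows "((\<lambda>t. V_pot n W (u(j := u j + of_real t * v))) has_real_derivative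
    (\<Sum>i=1..n-1. (1 - 1/sqrt((cmod (u (i+1) - u i))^2)) * (2 * Re ((u (i+1) - u i) * cnj (ev j v (i+1) - ev j v i))))
    + (1 - 1/sqrt((cmod (u n - u 1))^2)) * (2 * Re ((u n - u 1) * cnj (ev j v n - ev j v 1)))
    + (\<Sum>p=1..n. \<Sum>q=p+1..n. W' ((cmod (u p - u q))^2) * (2 * Re ((u p - u q) * cnj (ev j v p - ev j v q))))) (at 0)"
proof -
  have pos: "(cmod (u p - u q))^2 > 0" if "p \<in> {1..n}" "q \<in> {1..n}" "p \<noteq> q" for p q
    using u that unfolding Omega_def by auto
  show ?thesis
    unfolding V_pot_def pert
    apply (intro DERIV_add DERIV_sum term_deriv U_deriv W)
    using pos n by auto
qed

lemma cmod_1_cis_sq: "(cmod (1 - cis x))^2 = (2 * sin (x/2))^2"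
proof -
  have "(cmod (1 - cis x))^2 = (1 - cos x)^2 + (sin x)^2" by (simp add: cmod_power2)
  also have "\<dots> = 2 - 2 * cos x" using sin_cos_squared_add[of x] by (simp add: power2_eq_square algebra_simps)
  also have "\<dots> = (2 * sin (x/2))^2" using cos_double_sin[of "x/2"] by (simp add: power_mult_distrib)
  finally show ?thesis .
qed

lemma pair_sum:
  fixes g :: "nat \<Rightarrow> nat \<Rightarrow> real"
  assumes j: "j \<in> {1..n}" and z: "\<And>p q. p \<noteq> j \<Longrightarrow> q \<noteq> j \<Longrightarrow> g p q = 0"
  shows "(\<Sum>p=1..n. \<Sum>q=p+1..n. g p q) = (\<Sum>q=j+1..n. g j q) + (\<Sum>p=1..j-1. g p j)"
proof -
  have inner: "(\<Sum>q=p+1..n. g p q) = (if p = j then (\<Sum>q=j+1..n. g j q) else 0) + (if p < j then g p j else 0)" for p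
  proof (cases "p = j")
    case True then show ?thesis by simp
  next
    case False
    have "(\<Sum>q=p+1..n. g p q) = (\<Sum>q=p+1..n. if q = j then g p j else 0)"
      using z False by (intro sum.cong) auto
    also have "\<dots> = (if j \<in> {p+1..n} then g p j else 0)" by (simp add: sum.delta)
    finally show ?thesis using False j by auto
  qed
  have "(\<Sum>p=1..n. \<Sum>q=p+1..n. g p q) = (\<Sum>p=1..n. (if p = j then (\<Sum>q=j+1..n. g j q) else 0))
      + (\<Sum>p=1..n. (if p < j then g p j else 0))"
    by (simp only: sum.distrib[symmetric]) (intro sum.cong refl inner)
  also have "(\<Sum>p=1..n. (if p = j then (\<Sum>q=j+1..n. g j q) else 0)) = (\<Sum>q=j+1..n. g j q)"
    using j by (simp add: sum.delta)
  also have "(\<Sum>p=1..n. (if p < j then g p j else 0)) = (\<Sum>p\<in>{p\<in>{1..n}. p < j}. g p j)"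
    by (rule sum.inter_filter[symmetric]) simp
  also have "{p\<in>{1..n}. p < j} = {1..j-1}" using j by auto
  finally show ?thesis .
qed

lemma reim: "Re (c * (1 - cis t) * cnj v) = Re (c * cnj v) * (1 - cos t) + Im (c * cnj v) * sin t"
  by (simp add: algebra_simps)

lemma alg1: assumes "(s2::real) = 2 - 2 * B"
  shows "A * (2 * (R * (1 - B) + I * C)) = R * (A * s2) + 2 * I * (A * C)"
proof -
  have "A * (2 * (R * (1 - B) + I * C)) = R * (A * (2 - 2 * B)) + 2 * I * (A * C)"
    by (simp add: algebra_simps)
  then show ?thesis using assms by simp
qed

lemma alg2:
  fixes a s T :: real
  assumes "a > 0" "s > 0" "1 / (a * s) - 1 / (2 * s^2) * T = 1"
  shows "2 * s^2 * (1 - 1 / (a * s)) + T = 0"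
proof -
  have "2 * s^2 * (1 / (a * s) - 1 / (2 * s^2) * T) = 2 * s^2" using assms(3) by simp
  moreover have "2 * s^2 * (1 / (a * s) - 1 / (2 * s^2) * T) = 2 * s / a - T"
    using assms(1,2) by (simp add: field_simps power2_eq_square)
  moreover have "2 * s^2 * (1 - 1 / (a * s)) + T = 2 * s^2 - 2 * s / a + T"
    using assms(1,2) by (simp add: field_simps power2_eq_square)
  ultimately show ?thesis by linarith
qed

context
  fixes n :: nat and \<alpha> :: real
  assumes n2: "n \<ge> 2" and apos: "\<alpha> > 0"
begin

abbreviation "cc k \<equiv> complex_of_real \<alpha> * cis (real k * (2 * pi / real n))"
abbreviation "ss k \<equiv> 2 * sin (real k * pi / real n)"

lemma npos: "real n > 0" using n2 by simp

lemma cc_per: "cc (k + n) = cc k"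
proof -
  have "real (k + n) * (2 * pi / real n) = real k * (2 * pi / real n) + 2 * pi"
    using npos by (simp add: field_simps)
  then show ?thesis by (simp add: cis_mult[symmetric])
qed

lemma cc_shift: "cc (j + m) = cc j * cis (real m * (2 * pi / real n))"
proof -
  have "real (j + m) * (2 * pi / real n) = real j * (2 * pi / real n) + real m * (2 * pi / real n)"
    by (simp only: of_nat_add distrib_right)
  then show ?thesis by (simp only: cis_mult[symmetric] mult.assoc)
qed

lemma cc_diff: "cc j - cc (j + m) = cc j * (1 - cis (real m * (2 * pi / real n)))"
  unfolding cc_shift by (simp add: algebra_simps)

lemma cc_norm: "cmod (cc j) = \<alpha>" using apos by (simp add: norm_mult)

lemma cc_dist: "(cmod (cc j - cc (j + m)))^2 = \<alpha>^2 * (ss m)^2"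
proof -
  have "(cmod (cc j - cc (j + m)))^2 = \<alpha>^2 * (cmod (1 - cis (real m * (2 * pi / real n))))^2"
    unfolding cc_diff norm_mult using cc_norm by (simp add: power_mult_distrib)
  also have "\<dots> = \<alpha>^2 * (ss m)^2" unfolding cmod_1_cis_sq by simp
  finally show ?thesis .
qed

lemma ss_pos: "0 < m \<Longrightarrow> m < n \<Longrightarrow> ss m > 0"
  using npos by (auto intro!: sin_gt_zero simp: field_simps)

lemma cc_ne: "0 < j \<Longrightarrow> j < k \<Longrightarrow> k \<le> n \<Longrightarrow> cc j \<noteq> cc k"
proof -
  assume jk: "0 < j" "j < k" "k \<le> n"
  have p: "ss (k - j) > 0" using ss_pos[of "k - j"] jk by simp
  have "\<alpha>^2 * (ss (k - j))^2 > 0" using p apos by simp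
  then have "(cmod (cc j - cc (j + (k - j))))^2 > 0"
    by (simp only: cc_dist)
  then show ?thesis using jk by auto
qed

lemma cc_Omega: "(\<lambda>j. cc j) \<in> Omega n"
  unfolding Omega_def
proof (safe)
  fix j k assume "j \<in> {1..n}" "k \<in> {1..n}" "j \<noteq> k" "cc j = cc k"
  then show False using cc_ne[of j k] cc_ne[of k j] by (cases "j < k") auto
qed

lemma ss1_pos: "ss 1 > 0" using ss_pos[of 1] n2 by simp

lemma ss_sq: "(ss m)^2 = 2 - 2 * cos (real m * (2 * pi / real n))"
proof -
  have e: "real m * (2 * pi / real n) = 2 * (real m * pi / real n)" by simp
  show ?thesis unfolding e cos_double_sin by (simp add: power_mult_distrib)
qed

lemma Yalg:
  assumes "cc j = cc q * cis (2 * pi / real n)"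
  shows "2 * cc j - cc q - cc (j + 1) = cc j * of_real ((ss 1)^2)"
proof -
  define w where "w = cis (2 * pi / real n)"
  define w' where "w' = cis (- (2 * pi / real n))"
  have ww: "w * w' = 1" unfolding w_def w'_def by (simp add: cis_mult)
  have sw: "complex_of_real ((ss 1)^2) = 2 - w - w'"
    unfolding ss_sq w_def w'_def by (simp add: complex_eq_iff cis.sel)
  have j1: "cc (j + 1) = cc j * w" using cc_shift[of j 1] unfolding w_def by simp
  define A where "A = cc j"
  define B where "B = cc q"
  have AB: "A = B * w" using assms unfolding A_def B_def w_def .
  have BA: "B = A * w'" unfolding AB using ww by (simp add: mult.assoc)
  show ?thesis unfolding j1 sw A_def[symmetric] B_def[symmetric] BA
    by (simp add: algebra_simps ww)
qed

lemma Ysum: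
  assumes j: "j \<in> {1..n}"
  defines "ind \<equiv> (\<lambda>k. if k = j then 1 else 0 :: complex)"
  shows "(\<Sum>i=1..n-1. (cc (i+1) - cc i) * (ind (i+1) - ind i)) + (cc n - cc 1) * (ind n - ind 1)
       = cc j * of_real ((ss 1)^2)"
proof -
  define A where "A = (\<lambda>i. cc (i+1) - cc i)"
  have s1: "(\<Sum>i=1..n-1. A i * ind i) = (if j \<in> {1..n-1} then A j else 0)"
    unfolding ind_def by (simp add: if_distrib[of "\<lambda>x. A _ * x"] sum.delta cong: if_cong)
  have "(\<Sum>i=1..n-1. A i * ind (i+1)) = (\<Sum>i=1..n-1. if i = j - 1 then A i else 0)"
    using j unfolding ind_def by (intro sum.cong) auto
  also have "\<dots> = (if j - 1 \<in> {1..n-1} then A (j - 1) else 0)" by (simp add: sum.delta)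
  finally have s2: "(\<Sum>i=1..n-1. A i * ind (i+1)) = (if j - 1 \<in> {1..n-1} then A (j - 1) else 0)" .
  have "(\<Sum>i=1..n-1. (cc (i+1) - cc i) * (ind (i+1) - ind i))
     = (\<Sum>i=1..n-1. A i * ind (i+1)) - (\<Sum>i=1..n-1. A i * ind i)"
    unfolding A_def by (simp add: right_diff_distrib sum_subtractf)
  also have "\<dots> = (if j - 1 \<in> {1..n-1} then A (j - 1) else 0) - (if j \<in> {1..n-1} then A j else 0)"
    using s1 s2 by simp
  finally have e: "(\<Sum>i=1..n-1. (cc (i+1) - cc i) * (ind (i+1) - ind i)) =
     (if j - 1 \<in> {1..n-1} then A (j - 1) else 0) - (if j \<in> {1..n-1} then A j else 0)" .
  have w1: "cc (q + 1) = cc q * cis (2 * pi / real n)" for q using cc_shift[of q 1] by simp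
  consider "j = 1" | "j = n" | "1 < j" "j < n" using j by force
  then show ?thesis
  proof cases
    case 1
    have a: "cc 1 = cc n * cis (2 * pi / real n)" using w1[of n] cc_per[of 1] by (simp add: add.commute)
    have "(\<Sum>i=1..n-1. (cc (i+1) - cc i) * (ind (i+1) - ind i)) + (cc n - cc 1) * (ind n - ind 1)
      = 2 * cc j - cc n - cc (j + 1)"
      unfolding e using 1 n2 by (simp add: A_def ind_def le_diff_conv2)
    also have "\<dots> = cc j * of_real ((ss 1)^2)" using Yalg[of j n] a 1 by simp
    finally show ?thesis .
  next
    case 2
    have a: "cc n = cc (n - 1) * cis (2 * pi / real n)" using w1[of "n-1"] n2 by simp
    have i1: "n - 1 \<in> {1..n-1}" "n \<notin> {1..n-1}" "ind n = 1" "ind 1 = 0" "n - 1 + 1 = n"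
      using n2 unfolding ind_def 2 by auto
    define P where "P = cc (n - 1)"
    define Q where "Q = cc n"
    define R where "R = cc 1"
    have R: "cc (j + 1) = R" unfolding R_def 2 using cc_per[of 1] by (simp add: add.commute)
    have AP: "A (n - 1) = Q - P" unfolding A_def P_def Q_def by (simp only: i1(5))
    have "(\<Sum>i=1..n-1. (cc (i+1) - cc i) * (ind (i+1) - ind i)) + (cc n - cc 1) * (ind n - ind 1)
      = 2 * cc j - cc (n - 1) - cc (j + 1)"
      unfolding e unfolding R unfolding 2 P_def[symmetric] Q_def[symmetric] R_def[symmetric]
      using i1 AP R 2 by simp
    also have "\<dots> = cc j * of_real ((ss 1)^2)" using Yalg[of j "n-1"] a 2 by simp
    finally show ?thesis .
  next
    case 3
    have a: "cc j = cc (j - 1) * cis (2 * pi / real n)" using w1[of "j-1"] 3 by simp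
    have i1: "j - 1 \<in> {1..n-1}" "j \<in> {1..n-1}" "ind n = 0" "ind 1 = 0" "j - 1 + 1 = j"
      using n2 3 unfolding ind_def by auto
    define P where "P = cc (j - 1)"
    define Q where "Q = cc j"
    define R where "R = cc (j + 1)"
    have AP: "A (j - 1) = Q - P" unfolding A_def P_def Q_def by (simp only: i1(5))
    have AQ: "A j = R - Q" unfolding A_def R_def Q_def by simp
    have "(\<Sum>i=1..n-1. (cc (i+1) - cc i) * (ind (i+1) - ind i)) + (cc n - cc 1) * (ind n - ind 1)
      = 2 * cc j - cc (j - 1) - cc (j + 1)"
      unfolding e unfolding P_def[symmetric] Q_def[symmetric] R_def[symmetric]
      using i1 AP AQ 3 by simp
    also have "\<dots> = cc j * of_real ((ss 1)^2)" using Yalg[of j "j-1"] a by simp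
    finally show ?thesis .
  qed
qed

lemma Upart:
  assumes j: "j \<in> {1..n}"
  shows "(\<Sum>i=1..n-1. (1 - 1/sqrt((cmod (cc (i+1) - cc i))^2)) * (2 * Re ((cc (i+1) - cc i) * cnj (ev j v (i+1) - ev j v i))))
    + (1 - 1/sqrt((cmod (cc n - cc 1))^2)) * (2 * Re ((cc n - cc 1) * cnj (ev j v n - ev j v 1)))
    = (1 - 1/(\<alpha> * ss 1)) * (2 * Re (cc j * of_real ((ss 1)^2) * cnj v))"
proof -
  define c1 where "c1 = 1 - 1/(\<alpha> * ss 1)"
  define ind where "ind = (\<lambda>k. if k = j then 1 else 0 :: complex)"
  have sq: "sqrt (\<alpha>^2 * (ss 1)^2) = \<alpha> * ss 1" using apos ss1_pos by (simp add: real_sqrt_mult)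
  have d1: "(cmod (cc (i+1) - cc i))^2 = \<alpha>^2 * (ss 1)^2" for i
    by (simp only: norm_minus_commute[of "cc (i+1)"] cc_dist)
  have np: "cc (n + 1) = cc 1" using cc_per[of 1] by (simp only: add.commute)
  have dn: "(cmod (cc n - cc 1))^2 = \<alpha>^2 * (ss 1)^2"
    by (simp only: np[symmetric] cc_dist)
  have ce: "cnj (ev j v a - ev j v b) = (ind a - ind b) * cnj v" for a b
    by (simp add: ev_def ind_def)
  define f where "f = (\<lambda>i. (cc (i+1) - cc i) * (ind (i+1) - ind i))"
  have "(\<Sum>i=1..n-1. (1 - 1/sqrt((cmod (cc (i+1) - cc i))^2)) * (2 * Re ((cc (i+1) - cc i) * cnj (ev j v (i+1) - ev j v i))))
    + (1 - 1/sqrt((cmod (cc n - cc 1))^2)) * (2 * Re ((cc n - cc 1) * cnj (ev j v n - ev j v 1)))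
    = (\<Sum>i=1..n-1. c1 * (2 * Re (f i * cnj v))) + c1 * (2 * Re ((cc n - cc 1) * (ind n - ind 1) * cnj v))"
    unfolding d1 dn sq c1_def[symmetric] ce f_def by (simp add: mult.assoc)
  also have "\<dots> = c1 * (2 * Re (((\<Sum>i=1..n-1. f i) + (cc n - cc 1) * (ind n - ind 1)) * cnj v))"
    by (simp add: sum_distrib_left sum_distrib_right Re_sum distrib_left distrib_right)
  also have "\<dots> = c1 * (2 * Re (cc j * of_real ((ss 1)^2) * cnj v))"
    using Ysum[OF j] unfolding f_def ind_def by simp
  finally show ?thesis unfolding c1_def .
qed

lemma Wpart:
  assumes j: "j \<in> {1..n}"
  shows "(\<Sum>p=1..n. \<Sum>q=p+1..n. W' ((cmod (cc p - cc q))^2) * (2 * Re ((cc p - cc q) * cnj (ev j v p - ev j v q))))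
    = (\<Sum>m=1..n-1. W' (\<alpha>^2 * (ss m)^2) * (2 * Re (cc j * (1 - cis (real m * (2 * pi / real n))) * cnj v)))"
proof -
  define H where "H = (\<lambda>m. W' (\<alpha>^2 * (ss m)^2) * (2 * Re (cc j * (1 - cis (real m * (2 * pi / real n))) * cnj v)))"
  define g where "g = (\<lambda>p q. W' ((cmod (cc p - cc q))^2) * (2 * Re ((cc p - cc q) * cnj (ev j v p - ev j v q))))"
  have "(\<Sum>p=1..n. \<Sum>q=p+1..n. g p q) = (\<Sum>q=j+1..n. g j q) + (\<Sum>p=1..j-1. g p j)"
    by (rule pair_sum[OF j]) (simp add: g_def ev_def)
  also have "(\<Sum>q=j+1..n. g j q) = (\<Sum>q=j+1..n. H (q - j))"
  proof (intro sum.cong refl)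
    fix q assume q: "q \<in> {j+1..n}"
    then have qq: "q = j + (q - j)" by simp
    have "g j q = g j (j + (q - j))" using qq by simp
    also have "\<dots> = H (q - j)" unfolding g_def H_def unfolding cc_dist unfolding cc_diff
      using q by (simp add: ev_def)
    finally show "g j q = H (q - j)" .
  qed
  also have "\<dots> = (\<Sum>m=1..n-j. H m)"
    using sum.shift_bounds_cl_nat_ivl[of "\<lambda>q. H (q - j)" 1 j "n - j"] j by (simp add: add.commute)
  also have "(\<Sum>p=1..j-1. g p j) = (\<Sum>p=1..j-1. H (p + (n - j)))"
  proof (intro sum.cong refl)
    fix p assume p: "p \<in> {1..j-1}"
    have e1: "j + (p + (n - j)) = p + n" using j by simp
    have e: "cc p = cc (j + (p + (n - j)))" by (simp only: e1 cc_per)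
    have "g p j = W' ((cmod (cc j - cc p))^2) * (2 * Re ((cc j - cc p) * cnj v))"
      unfolding g_def using p by (simp add: ev_def norm_minus_commute algebra_simps)
    also have "\<dots> = H (p + (n - j))" unfolding e H_def unfolding cc_dist unfolding cc_diff by simp
    finally show "g p j = H (p + (n - j))" .
  qed
  also have "\<dots> = (\<Sum>m=1 + (n-j)..(j-1) + (n-j). H m)"
    by (rule sum.shift_bounds_cl_nat_ivl[symmetric])
  also have "{1 + (n-j)..(j-1) + (n-j)} = {n-j+1..n-1}" using j by auto
  also have "(\<Sum>m=1..n-j. H m) + (\<Sum>m=n-j+1..n-1. H m) = (\<Sum>m\<in>{1..n-j} \<union> {n-j+1..n-1}. H m)"
    by (rule sum.union_disjoint[symmetric]) auto
  also have "{1..n-j} \<union> {n-j+1..n-1} = {1..n-1}" using j by auto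
  finally show ?thesis unfolding g_def H_def .
qed

lemma sin_sum_zero:
  "(\<Sum>m=1..n-1. W' (\<alpha>^2 * (ss m)^2) * sin (real m * (2 * pi / real n))) = 0"
proof -
  define f where "f = (\<lambda>m. W' (\<alpha>^2 * (ss m)^2) * sin (real m * (2 * pi / real n)))"
  have "sum f {1..n-1} = (\<Sum>i=1..n-1. f (n - 1 + 1 - i))" by (rule sum.atLeastAtMost_rev)
  also have "\<dots> = (\<Sum>i=1..n-1. - f i)"
  proof (intro sum.cong refl)
    fix i assume i: "i \<in> {1..n-1}"
    have e: "n - 1 + 1 - i = n - i" using n2 by simp
    have "i \<le> n" using i by auto
    then have r: "real (n - i) = real n - real i" by (simp add: of_nat_diff)
    have a1: "real (n - i) * pi / real n = pi - real i * pi / real n"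
      unfolding r using npos by (simp add: field_simps)
    have a2: "real (n - i) * (2 * pi / real n) = 2 * pi - real i * (2 * pi / real n)"
      unfolding r using npos by (simp add: field_simps)
    show "f (n - 1 + 1 - i) = - f i" unfolding e f_def a1 a2 by simp
  qed
  also have "\<dots> = - sum f {1..n-1}" by (simp add: sum_negf)
  finally show ?thesis unfolding f_def[symmetric] by simp
qed

lemma Hsum:
  "(\<Sum>m=1..n-1. W' (\<alpha>^2 * (ss m)^2) * (2 * Re (cc j * (1 - cis (real m * (2 * pi / real n))) * cnj v)))
   = Re (cc j * cnj v) * (\<Sum>m=1..n-1. W' (\<alpha>^2 * (ss m)^2) * (ss m)^2)"
proof -
  define z where "z = cc j * cnj v"
  have t: "W' (\<alpha>^2 * (ss m)^2) * (2 * Re (cc j * (1 - cis (real m * (2 * pi / real n))) * cnj v))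
     = Re z * (W' (\<alpha>^2 * (ss m)^2) * (ss m)^2) + 2 * Im z * (W' (\<alpha>^2 * (ss m)^2) * sin (real m * (2 * pi / real n)))" for m
  proof -
    have "Re (cc j * (1 - cis (real m * (2 * pi / real n))) * cnj v)
       = Re z * (1 - cos (real m * (2 * pi / real n))) + Im z * sin (real m * (2 * pi / real n))"
      unfolding z_def by (rule reim)
    then show ?thesis by (simp only:) (rule alg1[OF ss_sq])
  qed
  show ?thesis unfolding t sum.distrib
    by (simp only: sum_distrib_left[symmetric] sin_sum_zero) (simp add: z_def)
qed

lemma circ_critical:
  assumes W: "\<And>x. x > 0 \<Longrightarrow> (W has_real_derivative deriv W x) (at x)"
    and S: "S_fun n W \<alpha> = 1"
  shows "critical_point n W (\<lambda>j. cc j)"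
  unfolding critical_point_def
proof (intro conjI ballI allI)
  show "(\<lambda>j. cc j) \<in> Omega n" by (rule cc_Omega)
next
  fix j v assume j: "j \<in> {1..n}"
  define T where "T = (\<Sum>m=1..n-1. deriv W (\<alpha>^2 * (ss m)^2) * (ss m)^2)"
  have ST: "1 / (\<alpha> * ss 1) - 1 / (2 * (ss 1)^2) * T = 1"
    using S unfolding S_fun_def Let_def T_def by simp
  have D: "((\<lambda>t. V_pot n W ((\<lambda>j. cc j)(j := cc j + of_real t * v))) has_real_derivative
     (1 - 1/(\<alpha> * ss 1)) * (2 * Re (cc j * of_real ((ss 1)^2) * cnj v)) + Re (cc j * cnj v) * T) (at 0)"
    using V_deriv[OF n2 cc_Omega W, of j v] unfolding Upart[OF j] Wpart[OF j] Hsum T_def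
    by simp
  have "Re (cc j * of_real ((ss 1)^2) * cnj v) = (ss 1)^2 * Re (cc j * cnj v)"
    by (simp add: algebra_simps)
  then have "(1 - 1/(\<alpha> * ss 1)) * (2 * Re (cc j * of_real ((ss 1)^2) * cnj v)) + Re (cc j * cnj v) * T
     = Re (cc j * cnj v) * (2 * (ss 1)^2 * (1 - 1/(\<alpha> * ss 1)) + T)" by (simp add: algebra_simps)
  also have "2 * (ss 1)^2 * (1 - 1/(\<alpha> * ss 1)) + T = 0"
    by (rule alg2[OF apos ss1_pos ST])
  finally show "((\<lambda>t. V_pot n W ((\<lambda>j. cc j)(j := cc j + of_real t * v))) has_real_derivative 0) (at 0)"
    using D by simp
qed

end


theorem corollary2:
  fixes n :: nat and W :: "real \<Rightarrow> real"
  assumes "n \<ge> 2"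
    and "C2_pos W"
    and "filterlim W at_top (at_right 0)"
    and "filterlim (\<lambda>x. - deriv W x) at_top (at_right 0)"
    and "(W \<longlongrightarrow> 0) at_top"
    and "(deriv W \<longlongrightarrow> 0) at_top"
  shows "filterlim (S_fun n W) at_top (at_right 0)
    \<and> (S_fun n W \<longlongrightarrow> 0) at_top
    \<and> (\<exists>\<alpha>>0. S_fun n W \<alpha> = 1)
    \<and> (\<forall>\<alpha>>0. S_fun n W \<alpha> = 1 \<longrightarrow>
          critical_point n W (\<lambda>j. complex_of_real \<alpha> * cis (real j * (2 * pi / real n))))"
proof -
  have Wd: "\<And>x. x > 0 \<Longrightarrow> (W has_real_derivative deriv W x) (at x)"
    using assms(2) unfolding C2_pos_def using DERIV_deriv_iff_real_differentiable by blast
  have Wdc: "\<And>x. x > 0 \<Longrightarrow> isCont (deriv W) x"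
    using assms(2) unfolding C2_pos_def using differentiable_imp_continuous_within by blast
  define s where "s = (\<lambda>k::nat. 2 * sin (real k * pi / real n))"
  define c where "c = 1 / (2 * (s 1)^2)"
  have npos: "real n > 0" using assms(1) by simp
  have spos: "s k > 0" if "0 < k" "k < n" for k
    unfolding s_def using that npos by (auto intro!: sin_gt_zero simp: field_simps)
  have s1: "s 1 > 0" using spos[of 1] assms(1) by simp
  have c0: "c > 0" unfolding c_def using s1 by simp
  define F where "F = (\<lambda>a. \<Sum>k=1..n-1. deriv W (a^2 * (s k)^2) * (s k)^2)"
  have Sform: "S_fun n W = (\<lambda>a. 1/(a * s 1) - c * F a)"
    by (rule ext) (simp only: S_fun_def Let_def s_def c_def F_def)
  have L1: "filterlim (S_fun n W) at_top (at_right 0)"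
  proof -
    have "filterlim (\<lambda>x. inverse x * (1 / s 1)) at_top (at_right 0)"
      by (rule filterlim_at_top_mult_tendsto_pos[OF tendsto_const _ filterlim_inverse_at_top_right])
         (use s1 in simp)
    then have inv: "filterlim (\<lambda>a. 1/(a * s 1)) at_top (at_right (0::real))"
      by (simp add: field_simps)
    have ev: "\<forall>\<^sub>F a in at_right 0. \<forall>k\<in>{1..n-1}. 0 \<le> - deriv W (a^2 * (s k)^2)"
    proof (rule eventually_ball_finite)
      show "\<forall>k\<in>{1..n-1}. \<forall>\<^sub>F a in at_right 0. 0 \<le> - deriv W (a^2 * (s k)^2)"
      proof
        fix k assume k: "k \<in> {1..n-1}"
        then have sk: "s k > 0" using spos[of k] by auto
        have "filterlim (\<lambda>a::real. a^2 * (s k)^2) (at_right 0) (at_right 0)"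
          unfolding filterlim_at
        proof
          show "\<forall>\<^sub>F a in at_right 0. a^2 * (s k)^2 \<in> {0<..} \<and> a^2 * (s k)^2 \<noteq> 0"
            using eventually_at_right_less[of "0::real"] by eventually_elim (use sk in auto)
          have "((\<lambda>a::real. a^2 * (s k)^2) \<longlongrightarrow> 0^2 * (s k)^2) (at_right 0)"
            by (intro tendsto_intros)
          then show "((\<lambda>a::real. a^2 * (s k)^2) \<longlongrightarrow> 0) (at_right 0)" by simp
        qed
        from filterlim_compose[OF assms(4) this]
        have "filterlim (\<lambda>a. - deriv W (a^2 * (s k)^2)) at_top (at_right 0)" by simp
        then show "\<forall>\<^sub>F a in at_right 0. 0 \<le> - deriv W (a^2 * (s k)^2)"
          unfolding filterlim_at_top by blast
      qed
    qed simp
    have "\<forall>\<^sub>F a in at_right 0. 1/(a * s 1) \<le> S_fun n W a"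
      using ev
    proof eventually_elim
      case (elim a)
      have "F a \<le> 0" unfolding F_def
        by (rule sum_nonpos) (use elim in \<open>auto intro: mult_nonpos_nonneg\<close>)
      then show ?case unfolding Sform using c0 by (simp add: mult_nonneg_nonpos)
    qed
    then show ?thesis by (rule filterlim_at_top_mono[OF inv])
  qed
  have L2: "(S_fun n W \<longlongrightarrow> 0) at_top"
  proof -
    have big: "filterlim (\<lambda>a::real. a * s 1) at_infinity at_top"
      by (rule filterlim_at_top_imp_at_infinity,
          rule filterlim_at_top_mult_tendsto_pos[OF tendsto_const s1 filterlim_ident])
    have t1: "((\<lambda>a. 1/(a * s 1)) \<longlongrightarrow> 0) at_top"
      by (rule tendsto_divide_0[OF tendsto_const big])
    have t2: "((\<lambda>a. deriv W (a^2 * (s k)^2) * (s k)^2) \<longlongrightarrow> 0 * (s k)^2) at_top"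
      if k: "k \<in> {1..n-1}" for k
    proof -
      have kk: "0 < k" "k < n" using k assms(1) by auto
      have sk: "(s k)^2 > 0" using spos[OF kk] by simp
      have "filterlim (\<lambda>a::real. a^2 * (s k)^2) at_top at_top"
        by (rule filterlim_at_top_mult_tendsto_pos[OF tendsto_const sk])
           (rule filterlim_pow_at_top[OF _ filterlim_ident], simp)
      from filterlim_compose[OF assms(6) this]
      have "((\<lambda>a. deriv W (a^2 * (s k)^2)) \<longlongrightarrow> 0) at_top" by simp
      then show ?thesis by (intro tendsto_mult tendsto_const)
    qed
    have "(F \<longlongrightarrow> (\<Sum>k=1..n-1. 0 * (s k)^2)) at_top"
      unfolding F_def by (rule tendsto_sum) (rule t2)
    then have "(F \<longlongrightarrow> 0) at_top" by simp
    from tendsto_diff[OF t1 tendsto_mult[OF tendsto_const this]]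
    show ?thesis unfolding Sform by simp
  qed
  have cont: "isCont (S_fun n W) a" if a: "a > 0" for a
  proof -
    have "isCont (\<lambda>a. deriv W (a^2 * (s k)^2) * (s k)^2) a" if k: "k \<in> {1..n-1}" for k
    proof -
      have kk: "0 < k" "k < n" using k assms(1) by auto
      have sk: "(s k)^2 > 0" using spos[OF kk] by simp
      have "isCont (\<lambda>a. deriv W (a^2 * (s k)^2)) a"
      proof -
        have f: "isCont (\<lambda>a. a^2 * (s k)^2) a" by (intro continuous_intros)
        have g: "isCont (deriv W) (a^2 * (s k)^2)" using Wdc a sk by simp
        show ?thesis using isCont_o2[OF f g] .
      qed
      then show ?thesis by (intro continuous_intros)
    qed
    then have "isCont F a" unfolding F_def by (intro isCont_sum) auto
    then show ?thesis unfolding Sform using a s1 by (intro continuous_intros) auto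
  qed
  have L3: "\<exists>\<alpha>>0. S_fun n W \<alpha> = 1"
  proof -
    have "\<forall>\<^sub>F a in at_right 0. 1 \<le> S_fun n W a" using L1 unfolding filterlim_at_top by blast
    then obtain b where b: "b > 0" "\<And>y. y > 0 \<Longrightarrow> y < b \<Longrightarrow> 1 \<le> S_fun n W y"
      unfolding eventually_at_right_field by auto
    define a0 where "a0 = b / 2"
    have a0: "a0 > 0" "1 \<le> S_fun n W a0" using b unfolding a0_def by auto
    have "\<forall>\<^sub>F x in at_top. dist (S_fun n W x) 0 < 1" using L2 unfolding tendsto_iff by simp
    moreover have "\<forall>\<^sub>F x in at_top. a0 \<le> x" by (rule eventually_ge_at_top)
    ultimately have "\<forall>\<^sub>F x in at_top. dist (S_fun n W x) 0 < 1 \<and> a0 \<le> x" by eventually_elim auto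
    then obtain b1 where b1: "dist (S_fun n W b1) 0 < 1" "a0 \<le> b1"
      unfolding eventually_at_top_linorder by auto
    have "S_fun n W b1 \<le> 1" using b1 by (simp add: dist_real_def)
    from IVT2[of "S_fun n W" b1 1 a0, OF this a0(2) b1(2)]
    obtain x where "x \<ge> a0" "x \<le> b1" "S_fun n W x = 1"
      using cont a0(1) by force
    then show ?thesis using a0(1) by (intro exI[of _ x]) auto
  qed
  have L4: "\<forall>\<alpha>>0. S_fun n W \<alpha> = 1 \<longrightarrow>
          critical_point n W (\<lambda>j. complex_of_real \<alpha> * cis (real j * (2 * pi / real n)))"
    using circ_critical[OF assms(1) _ Wd] by blast
  show ?thesis using L1 L2 L3 L4 by blast
qed

end
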